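(* Let $\Gamma$ be an $N_{\mathbb R}$-parameterized tropical curve, let $\Gamma_0\subset\Gamma$ be the maximal subgraph with $V(\Gamma_0)=V^f(\Gamma)$ whose edges are bounded edges with trivial slope ($N_e=0$), and let $\overline\Gamma=\Gamma/\Gamma_0$ be obtained by contracting each connected component of $\Gamma_0$ to a vertex (with $h_{\overline\Gamma}$ equal to the common value of $h_\Gamma$ on that component, and unchanged elsewhere; this is an $N_{\mathbb R}$-parameterized tropical curve with $g(\overline\Gamma)\le g(\Gamma)$). Fix an orientation of $\Gamma$ and the induced one on $\overline\Gamma$. Then for every abelian group $G$ the natural map $\mathbb E^1_G(\overline\Gamma)\to\mathbb E^1_G(\Gamma)$ (diagonal on vertices, inclusion on edges) is an isomorphism, and there is an exact sequence $$0\to\mathbb E^2_G(\overline\Gamma)\to\mathbb E^2_G(\Gamma)\to N_G^{\,g(\Gamma)-g(\overline\Gamma)}\to0.$$ The same holds with $\mathbb E^\bullet$ replaced by $\mathcal E^\bullet$.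
   Context: $N$ a lattice, $N_G=N\otimes G$. An $N_{\mathbb R}$-parameterized tropical curve: tropical curve $\Gamma$ (finite connected metric graph; finite vertices $V^f$; ordered infinite vertices of valency one joined to finite vertices by unbounded edges of length $\infty$; bounded edges $E^b$ with lengths $|e|>0$) with $h_\Gamma:V(\Gamma)\to N_{\mathbb R}$, $h_\Gamma(v)\in N$ for infinite $v$, $\frac1{|e|}(h_\Gamma(v)-h_\Gamma(v'))\in N$ for bounded $e$ joining $v,v'$, balancing $\sum_{v'\in V^f,e\in E_{vv'}}\frac1{|e|}(h_\Gamma(v')-h_\Gamma(v))+\sum_{v'\in V^\infty,e\in E_{vv'}}h_\Gamma(v')=0$ at each finite $v$. Genus $g(\Gamma)=1-|V(\Gamma)|+|E(\Gamma)|$. Slope $N_e=N\cap\mathbb R(h_\Gamma(v)-h_\Gamma(v'))$ of bounded $e$; multiplicity $l(e)$ = integral length of $\frac1{|e|}(h_\Gamma(v)-h_\Gamma(v'))$. Complexes: with $\epsilon(e,v)=-1,1,0$ if $v$ is initial point, target, neither, define $b_G,\beta_G:\big(\bigoplus_{v\in V^f}N_G\big)\oplus\big(\bigoplus_{e\in E^b}(N_e)_G\big)\to\bigoplus_{e\in E^b}N_G$ by $x_v\mapsto(\epsilon(e,v)x_v)_e$, $x_e\mapsto x_e$ resp. $x_e\mapsto l(e)x_e$; $\mathbb E^1_G,\mathbb E^2_G$ kernel and cokernel of $b_G$, $\mathcal E^1_G,\mathcal E^2_G$ of $\beta_G$. *)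

theory Defs
  imports Complex_Main
begin

text \<open>Lattice N = Z^'n (for a finite index type 'n), N_R = ('n => real),
  N_G = N tensor G = ('n => 'g) for an abelian group 'g.\<close>

record ('v, 'e, 'n) tcurve =
  VF   :: "'v set"            \<comment> \<open>finite vertices\<close>
  VI   :: "'v set"            \<comment> \<open>infinite vertices\<close>
  ED   :: "'e set"
  src  :: "'e \<Rightarrow> 'v"
  tgt  :: "'e \<Rightarrow> 'v"
  len  :: "'e \<Rightarrow> real"      \<comment> \<open>length |e| (used on bounded edges only)\<close>
  hmap :: "'v \<Rightarrow> 'n \<Rightarrow> real"

definition in_lattice :: "('n \<Rightarrow> real) \<Rightarrow> bool" where
  "in_lattice x \<longleftrightarrow> (\<forall>i. x i \<in> \<int>)"

definition bounded_edges :: "('v,'e,'n) tcurve \<Rightarrow> 'e set" where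
  "bounded_edges C = {e \<in> ED C. src C e \<in> VF C \<and> tgt C e \<in> VF C}"

definition unbounded_edges :: "('v,'e,'n) tcurve \<Rightarrow> 'e set" where
  "unbounded_edges C = ED C - bounded_edges C"

definition incident :: "('v,'e,'n) tcurve \<Rightarrow> 'e \<Rightarrow> 'v \<Rightarrow> bool" where
  "incident C e v \<longleftrightarrow> src C e = v \<or> tgt C e = v"

definition other_end :: "('v,'e,'n) tcurve \<Rightarrow> 'e \<Rightarrow> 'v \<Rightarrow> 'v" where
  "other_end C e v = (if src C e = v then tgt C e else src C e)"

definition adjacent :: "('v,'e,'n) tcurve \<Rightarrow> 'v \<Rightarrow> 'v \<Rightarrow> bool" where
  "adjacent C v w \<longleftrightarrow> (\<exists>e\<in>ED C. (src C e = v \<and> tgt C e = w) \<or> (src C e = w \<and> tgt C e = v))"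

definition edge_vec :: "('v,'e,'n) tcurve \<Rightarrow> 'e \<Rightarrow> 'n \<Rightarrow> real" where
  "edge_vec C e = (\<lambda>i. (hmap C (tgt C e) i - hmap C (src C e) i) / len C e)"

definition is_param_trop_curve :: "('v,'e,'n) tcurve \<Rightarrow> bool" where
  "is_param_trop_curve C \<longleftrightarrow>
     finite (VF C) \<and> finite (VI C) \<and> finite (ED C) \<and> VF C \<noteq> {} \<and> VF C \<inter> VI C = {} \<and>
     (\<forall>e\<in>ED C. src C e \<in> VF C \<union> VI C \<and> tgt C e \<in> VF C \<union> VI C \<and>
                (src C e \<in> VF C \<or> tgt C e \<in> VF C)) \<and>
     (\<forall>w\<in>VI C. card {e \<in> ED C. incident C e w} = 1) \<and>
     (\<forall>v\<in>VF C \<union> VI C. \<forall>w\<in>VF C \<union> VI C. (adjacent C)\<^sup>*\<^sup>* v w) \<and>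
     (\<forall>e\<in>bounded_edges C. len C e > 0) \<and>
     (\<forall>w\<in>VI C. in_lattice (hmap C w)) \<and>
     (\<forall>e\<in>bounded_edges C. in_lattice (edge_vec C e)) \<and>
     (\<forall>v\<in>VF C. \<forall>i.
        (\<Sum>e\<in>{e \<in> bounded_edges C. incident C e v}.
            (hmap C (other_end C e v) i - hmap C v i) / len C e)
      + (\<Sum>e\<in>{e \<in> unbounded_edges C. incident C e v}. hmap C (other_end C e v) i) = 0)"

definition genus :: "('v,'e,'n) tcurve \<Rightarrow> int" where
  "genus C = 1 - int (card (VF C \<union> VI C)) + int (card (ED C))"

definition slope :: "('v,'e,'n) tcurve \<Rightarrow> 'e \<Rightarrow> ('n \<Rightarrow> int) set" where
  "slope C e = {a. \<exists>t::real. \<forall>i. real_of_int (a i) = t * (hmap C (tgt C e) i - hmap C (src C e) i)}"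

text \<open>Integral length of a lattice vector w: the l with w = l u, u primitive (0 for w = 0).\<close>
definition int_length :: "('n \<Rightarrow> real) \<Rightarrow> nat" where
  "int_length w = (if w = (\<lambda>_. 0) then 0
     else (GREATEST k::nat. \<exists>u. in_lattice u \<and> w = (\<lambda>i. real k * u i)))"

definition zmul :: "int \<Rightarrow> 'g::ab_group_add \<Rightarrow> 'g" where
  "zmul k g = (if 0 \<le> k then (\<Sum>_\<in>{..<nat k}. g) else - (\<Sum>_\<in>{..<nat (- k)}. g))"

text \<open>(N_e)_G = N_e tensor G, realised as its image in N_G (injective since N_e is saturated).\<close>
definition slope_G :: "('v,'e,'n) tcurve \<Rightarrow> 'e \<Rightarrow> ('n \<Rightarrow> 'g::ab_group_add) set" where
  "slope_G C e = {x. \<exists>J::nat set. \<exists>a g. finite J \<and> (\<forall>j\<in>J. a j \<in> slope C e) \<and>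
                       x = (\<lambda>i. \<Sum>j\<in>J. zmul (a j i) (g j))}"

definition eps :: "('v,'e,'n) tcurve \<Rightarrow> 'e \<Rightarrow> 'v \<Rightarrow> int" where
  "eps C e v = (if v = tgt C e then 1 else 0) - (if v = src C e then 1 else 0)"

text \<open>Edge multiplier: 1 for b_G, l(e) for beta_G (flag cal = True).\<close>
definition edge_mult :: "bool \<Rightarrow> ('v,'e,'n) tcurve \<Rightarrow> 'e \<Rightarrow> int" where
  "edge_mult cal C e = (if cal then int (int_length (edge_vec C e)) else 1)"

definition cx_dom :: "('v,'e,'n) tcurve \<Rightarrow> (('v \<Rightarrow> 'n \<Rightarrow> 'g::ab_group_add) \<times> ('e \<Rightarrow> 'n \<Rightarrow> 'g)) set" where
  "cx_dom C = {(xv, xe). (\<forall>v. v \<notin> VF C \<longrightarrow> xv v = (\<lambda>_. 0)) \<and>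
                         (\<forall>e. e \<notin> bounded_edges C \<longrightarrow> xe e = (\<lambda>_. 0)) \<and>
                         (\<forall>e\<in>bounded_edges C. xe e \<in> slope_G C e)}"

definition cx_cod :: "('v,'e,'n) tcurve \<Rightarrow> ('e \<Rightarrow> 'n \<Rightarrow> 'g::ab_group_add) set" where
  "cx_cod C = {y. \<forall>e. e \<notin> bounded_edges C \<longrightarrow> y e = (\<lambda>_. 0)}"

definition cx_map :: "bool \<Rightarrow> ('v,'e,'n) tcurve \<Rightarrow>
     ('v \<Rightarrow> 'n \<Rightarrow> 'g::ab_group_add) \<times> ('e \<Rightarrow> 'n \<Rightarrow> 'g) \<Rightarrow> ('e \<Rightarrow> 'n \<Rightarrow> 'g)" where
  "cx_map cal C x = (\<lambda>e. if e \<in> bounded_edges C then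
       (\<lambda>i. (\<Sum>v\<in>VF C. zmul (eps C e v) (fst x v i)) + zmul (edge_mult cal C e) (snd x e i))
     else (\<lambda>_. 0))"

text \<open>E^1 (cal = False) / calE^1 (cal = True): kernel; the cokernel E^2 is cx_cod modulo cx_image.\<close>
definition cx_ker :: "bool \<Rightarrow> ('v,'e,'n) tcurve \<Rightarrow> (('v \<Rightarrow> 'n \<Rightarrow> 'g::ab_group_add) \<times> ('e \<Rightarrow> 'n \<Rightarrow> 'g)) set" where
  "cx_ker cal C = {x \<in> cx_dom C. cx_map cal C x = (\<lambda>_ _. 0)}"

definition cx_image :: "bool \<Rightarrow> ('v,'e,'n) tcurve \<Rightarrow> ('e \<Rightarrow> 'n \<Rightarrow> 'g::ab_group_add) set" where
  "cx_image cal C = cx_map cal C ` cx_dom C"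

definition zero_slope_edges :: "('v,'e,'n) tcurve \<Rightarrow> 'e set" where
  "zero_slope_edges C = {e \<in> bounded_edges C. slope C e = {\<lambda>_. 0}}"

definition rel0 :: "('v,'e,'n) tcurve \<Rightarrow> 'v \<Rightarrow> 'v \<Rightarrow> bool" where
  "rel0 C v w \<longleftrightarrow> (\<exists>e\<in>zero_slope_edges C. (src C e = v \<and> tgt C e = w) \<or> (src C e = w \<and> tgt C e = v))"

definition vclass :: "('v,'e,'n) tcurve \<Rightarrow> 'v \<Rightarrow> 'v set" where
  "vclass C v = (if v \<in> VF C then {w \<in> VF C. (rel0 C)\<^sup>*\<^sup>* v w} else {v})"

definition contract :: "('v,'e,'n) tcurve \<Rightarrow> ('v set,'e,'n) tcurve" where
  "contract C = \<lparr> VF = vclass C ` VF C, VI = vclass C ` VI C,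
                  ED = ED C - zero_slope_edges C,
                  src = vclass C \<circ> src C, tgt = vclass C \<circ> tgt C, len = len C,
                  hmap = (\<lambda>c. hmap C (SOME v. v \<in> c)) \<rparr>"

definition nat_map1 :: "('v,'e,'n) tcurve \<Rightarrow>
    ('v set \<Rightarrow> 'n \<Rightarrow> 'g::ab_group_add) \<times> ('e \<Rightarrow> 'n \<Rightarrow> 'g) \<Rightarrow> ('v \<Rightarrow> 'n \<Rightarrow> 'g) \<times> ('e \<Rightarrow> 'n \<Rightarrow> 'g)" where
  "nat_map1 C x = ((\<lambda>v. if v \<in> VF C then fst x (vclass C v) else (\<lambda>_. 0)), snd x)"

text \<open>N_G^k as finitely indexed tuples.\<close>
definition NG_pow :: "nat \<Rightarrow> (nat \<Rightarrow> 'n \<Rightarrow> 'g::ab_group_add) set" where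
  "NG_pow k = {f. \<forall>j\<ge>k. f j = (\<lambda>_. 0)}"

end

theory Submission
  imports Defs "HOL-Library.Function_Algebras"
begin

definition adjG :: "'e set \<Rightarrow> ('e\<Rightarrow>'v) \<Rightarrow> ('e\<Rightarrow>'v) \<Rightarrow> 'v \<Rightarrow> 'v \<Rightarrow> bool" where
  "adjG Z s t v w \<longleftrightarrow> (\<exists>e\<in>Z. (s e = v \<and> t e = w) \<or> (s e = w \<and> t e = v))"

definition compsG :: "'v set \<Rightarrow> 'e set \<Rightarrow> ('e\<Rightarrow>'v) \<Rightarrow> ('e\<Rightarrow>'v) \<Rightarrow> 'v set set" where
  "compsG V Z s t = (\<lambda>v. {w\<in>V. (adjG Z s t)\<^sup>*\<^sup>* v w}) ` V"

definition codG :: "'e set \<Rightarrow> ('e \<Rightarrow> 'm::zero) set" where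
  "codG Z = {y. \<forall>e. e \<notin> Z \<longrightarrow> y e = 0}"

definition deltaG :: "'e set \<Rightarrow> ('e\<Rightarrow>'v) \<Rightarrow> ('e\<Rightarrow>'v) \<Rightarrow> ('v \<Rightarrow> 'm::ab_group_add) \<Rightarrow> 'e \<Rightarrow> 'm" where
  "deltaG Z s t x = (\<lambda>e. if e \<in> Z then x (t e) - x (s e) else 0)"

definition PwG :: "nat \<Rightarrow> (nat \<Rightarrow> 'm::zero) set" where
  "PwG b = {f. \<forall>j\<ge>b. f j = 0}"

lemma adjG_sym: "adjG Z s t v w \<Longrightarrow> adjG Z s t w v"
  unfolding adjG_def by blast

lemma rtr_sym: "(adjG Z s t)\<^sup>*\<^sup>* v w \<Longrightarrow> (adjG Z s t)\<^sup>*\<^sup>* w v"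
proof (induction rule: rtranclp_induct)
  case base then show ?case by simp
next
  case (step y z)
  then show ?case by (meson adjG_sym converse_rtranclp_into_rtranclp)
qed

lemma adjG_insert: "adjG (insert e Z) s t v w \<longleftrightarrow> adjG Z s t v w \<or> (s e = v \<and> t e = w) \<or> (s e = w \<and> t e = v)"
  unfolding adjG_def by blast

lemma rtr_insert:
  "(adjG (insert e Z) s t)\<^sup>*\<^sup>* v w \<longleftrightarrow>
     (adjG Z s t)\<^sup>*\<^sup>* v w \<or> ((adjG Z s t)\<^sup>*\<^sup>* v (s e) \<and> (adjG Z s t)\<^sup>*\<^sup>* (t e) w)
     \<or> ((adjG Z s t)\<^sup>*\<^sup>* v (t e) \<and> (adjG Z s t)\<^sup>*\<^sup>* (s e) w)"
  (is "?L \<longleftrightarrow> ?R")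
proof
  assume ?L then show ?R
  proof (induction rule: rtranclp_induct)
    case base then show ?case by simp
  next
    case (step y z)
    from step(2) consider "adjG Z s t y z" | "s e = y \<and> t e = z" | "s e = z \<and> t e = y"
      by (auto simp: adjG_insert)
    then show ?case
    proof cases
      case 1 then show ?thesis using step(3) by (meson rtranclp.rtrancl_into_rtrancl)
    next
      case 2 then show ?thesis using step(3) by auto
    next
      case 3 then show ?thesis using step(3) by auto
    qed
  qed
next
  have mono: "(adjG Z s t)\<^sup>*\<^sup>* a b \<Longrightarrow> (adjG (insert e Z) s t)\<^sup>*\<^sup>* a b" for a b
    by (rule rtranclp_mono[THEN predicate2D, of "adjG Z s t"]) (auto simp: adjG_insert)
  have e1: "(adjG (insert e Z) s t)\<^sup>*\<^sup>* (s e) (t e)" "(adjG (insert e Z) s t)\<^sup>*\<^sup>* (t e) (s e)"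
    by (auto simp: adjG_insert intro!: r_into_rtranclp)
  assume ?R then show ?L
    using mono e1 by (meson rtranclp_trans)
qed

lemma path_fun:
  assumes "(adjG Z s t)\<^sup>*\<^sup>* u w"
  shows "\<exists>\<psi>::('e\<Rightarrow>'m::ab_group_add)\<Rightarrow>'m. (\<forall>y z. \<psi> (y+z) = \<psi> y + \<psi> z) \<and>
           (\<forall>x. \<psi> (deltaG Z s t x) = x w - x u)"
  using assms
proof (induction rule: rtranclp_induct)
  case base
  show ?case by (rule exI[of _ "\<lambda>_. 0"]) simp
next
  case (step w w')
  then obtain \<psi> :: "('e\<Rightarrow>'m)\<Rightarrow>'m" where p1: "\<forall>y z. \<psi> (y+z) = \<psi> y + \<psi> z"
    and p2: "\<forall>x. \<psi> (deltaG Z s t x) = x w - x u" by blast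
  from step(2) obtain f where f: "f \<in> Z" "(s f = w \<and> t f = w') \<or> (s f = w' \<and> t f = w)"
    unfolding adjG_def by blast
  then consider "s f = w" "t f = w'" | "s f = w'" "t f = w" by blast
  then show ?case
  proof cases
    case 1
    show ?thesis
      by (rule exI[of _ "\<lambda>y. \<psi> y + y f"], intro conjI allI)
         (use p1[unfolded plus_fun_def] p2 f 1 in \<open>simp_all add: deltaG_def algebra_simps\<close>)
  next
    case 2
    show ?thesis
      by (rule exI[of _ "\<lambda>y. \<psi> y - y f"], intro conjI allI)
         (use p1[unfolded plus_fun_def] p2 f 2 in \<open>simp_all add: deltaG_def algebra_simps\<close>)
  qed
qed

lemma rtr_trans_sym:
  "(adjG Z s t)\<^sup>*\<^sup>* a b \<Longrightarrow> (adjG Z s t)\<^sup>*\<^sup>* b c \<Longrightarrow> (adjG Z s t)\<^sup>*\<^sup>* a c"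
  by (rule rtranclp_trans)

lemma compsA:
  assumes "(adjG Z s t)\<^sup>*\<^sup>* (s e) (t e)"
  shows "compsG V (insert e Z) s t = compsG V Z s t"
proof -
  have "(adjG (insert e Z) s t)\<^sup>*\<^sup>* v w \<longleftrightarrow> (adjG Z s t)\<^sup>*\<^sup>* v w" for v w
    unfolding rtr_insert using assms rtr_sym[OF assms] by (meson rtranclp_trans)
  then show ?thesis unfolding compsG_def by simp
qed

lemma compsB:
  assumes fin: "finite V" and se: "s e \<in> V" and te: "t e \<in> V"
    and nc: "\<not> (adjG Z s t)\<^sup>*\<^sup>* (s e) (t e)"
  shows "card (compsG V (insert e Z) s t) + 1 = card (compsG V Z s t)"
proof -
  let ?R = "(adjG Z s t)\<^sup>*\<^sup>*"
  let ?R1 = "(adjG (insert e Z) s t)\<^sup>*\<^sup>*"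
  define comp where "comp v = {w\<in>V. ?R v w}" for v
  define comp1 where "comp1 v = {w\<in>V. ?R1 v w}" for v
  define A where "A = comp (s e)"
  define B where "B = comp (t e)"
  have sym: "?R a b \<Longrightarrow> ?R b a" for a b by (rule rtr_sym)
  have tr: "?R a b \<Longrightarrow> ?R b c \<Longrightarrow> ?R a c" for a b c by (rule rtranclp_trans)
  have c1: "comp1 v = (if ?R v (s e) \<or> ?R v (t e) then A \<union> B else comp v)" for v
  proof (cases "?R v (s e)")
    case True
    then have "\<not> ?R v (t e)" using nc sym tr by blast
    have "?R1 v w \<longleftrightarrow> ?R (s e) w \<or> ?R (t e) w" for w
      unfolding rtr_insert using True \<open>\<not> ?R v (t e)\<close> sym tr by blast
    then show ?thesis using True unfolding comp1_def A_def B_def comp_def by auto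
  next
    case False
    note F = False
    show ?thesis
    proof (cases "?R v (t e)")
      case True
      have "?R1 v w \<longleftrightarrow> ?R (s e) w \<or> ?R (t e) w" for w
        unfolding rtr_insert using True F sym tr by blast
      then show ?thesis using True unfolding comp1_def A_def B_def comp_def by auto
    next
      case False
      have "?R1 v w \<longleftrightarrow> ?R v w" for w
        unfolding rtr_insert using False F sym tr by blast
      then show ?thesis using False F unfolding comp1_def comp_def by auto
    qed
  qed
  have ccomp: "comp v = A" if "?R v (s e)" for v
    unfolding comp_def A_def using that sym tr by blast
  have ccompB: "comp v = B" if "?R v (t e)" for v
    unfolding comp_def B_def using that sym tr by blast
  have AinC: "A \<in> compsG V Z s t" "B \<in> compsG V Z s t"
    unfolding compsG_def A_def B_def comp_def using se te by auto
  have sA: "s e \<in> A" using se unfolding A_def comp_def by simp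
  have tB: "t e \<in> B" using te unfolding B_def comp_def by simp
  have AB: "A \<noteq> B" using sA nc sym unfolding B_def comp_def by blast
  have eq: "compsG V (insert e Z) s t = insert (A \<union> B) (compsG V Z s t - {A, B})"
  proof
    show "compsG V (insert e Z) s t \<subseteq> insert (A \<union> B) (compsG V Z s t - {A, B})"
    proof
      fix X assume "X \<in> compsG V (insert e Z) s t"
      then obtain v where v: "v \<in> V" "X = comp1 v" unfolding compsG_def comp1_def by auto
      show "X \<in> insert (A \<union> B) (compsG V Z s t - {A, B})"
      proof (cases "?R v (s e) \<or> ?R v (t e)")
        case True then show ?thesis using v c1 by simp
      next
        case False
        have "comp v \<noteq> A" using False sA unfolding A_def comp_def by blast
        moreover have "comp v \<noteq> B" using False tB unfolding B_def comp_def by blast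
        moreover have "comp v \<in> compsG V Z s t" using v unfolding compsG_def comp_def by auto
        ultimately show ?thesis using v c1 False by simp
      qed
    qed
  next
    show "insert (A \<union> B) (compsG V Z s t - {A, B}) \<subseteq> compsG V (insert e Z) s t"
    proof
      fix X assume X: "X \<in> insert (A \<union> B) (compsG V Z s t - {A, B})"
      show "X \<in> compsG V (insert e Z) s t"
      proof (cases "X = A \<union> B")
        case True
        then have "X = comp1 (s e)" using c1[of "s e"] by simp
        then show ?thesis using se unfolding compsG_def comp1_def by auto
      next
        case False
        then have "X \<in> compsG V Z s t" "X \<noteq> A" "X \<noteq> B" using X by auto
        then obtain v where v: "v \<in> V" "X = comp v" unfolding compsG_def comp_def by auto
        then have "\<not> ?R v (s e)" "\<not> ?R v (t e)" using ccomp ccompB \<open>X \<noteq> A\<close> \<open>X \<noteq> B\<close> by auto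
        then have "X = comp1 v" using c1 v by simp
        then show ?thesis using v unfolding compsG_def comp1_def by auto
      qed
    qed
  qed
  have fC: "finite (compsG V Z s t)" unfolding compsG_def using fin by simp
  have nin: "A \<union> B \<notin> compsG V Z s t"
  proof
    assume "A \<union> B \<in> compsG V Z s t"
    then obtain v where "A \<union> B = comp v" unfolding compsG_def comp_def by auto
    then have "?R v (s e)" "?R v (t e)" using sA tB unfolding comp_def by auto
    then show False using nc sym tr by blast
  qed
  have "card (compsG V (insert e Z) s t) = card (compsG V Z s t - {A, B}) + 1"
    unfolding eq using fC nin by (simp add: card_insert_if)
  moreover have "card {A,B} \<le> card (compsG V Z s t)" using fC AinC by (intro card_mono) auto
  moreover have "card (compsG V Z s t - {A, B}) = card (compsG V Z s t) - card {A,B}"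
    using fC AinC by (intro card_Diff_subset) auto
  moreover have "card {A,B} = 2" using AB by simp
  ultimately show ?thesis by simp
qed

lemma codG_upd: "y \<in> codG (insert e F) \<Longrightarrow> y(e:=0) \<in> codG F"
  unfolding codG_def by auto

lemma codG_mono: "y \<in> codG F \<Longrightarrow> y \<in> codG (insert e F)"
  unfolding codG_def by auto

lemma codG_id: "e \<notin> F \<Longrightarrow> y \<in> codG F \<Longrightarrow> y(e:=0) = y"
  unfolding codG_def by (auto simp: fun_eq_iff)

lemma upd_plus: "(y + z)(e:=(0::'m::monoid_add)) = y(e:=0) + z(e:=0)"
  by (auto simp: fun_eq_iff)

lemma delta_upd: "e \<notin> F \<Longrightarrow> (deltaG (insert e F) s t x)(e:=0) = deltaG F s t x"
  unfolding deltaG_def by (auto simp: fun_eq_iff)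

lemma delta_cod: "deltaG F s t x \<in> codG F"
  unfolding deltaG_def codG_def by auto

lemma H1:
  fixes s t :: "'e \<Rightarrow> 'v" and V :: "'v set" and Z :: "'e set"
  assumes "finite Z" "finite V" "\<forall>e\<in>Z. s e \<in> V \<and> t e \<in> V"
  shows "\<exists>(p::('e\<Rightarrow>'m::ab_group_add)\<Rightarrow>nat\<Rightarrow>'m) b. (\<forall>y\<in>codG Z. \<forall>z\<in>codG Z. p (y+z) = p y + p z)
     \<and> p ` codG Z = PwG b \<and> {y\<in>codG Z. p y = 0} = range (deltaG Z s t)
     \<and> b + card V = card Z + card (compsG V Z s t)"
  using assms(1,3)
proof (induction Z rule: finite_induct)
  case empty
  have c0: "codG {} = {0::'e\<Rightarrow>'m}" unfolding codG_def by (auto simp: fun_eq_iff)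
  have p0: "PwG 0 = {0::nat\<Rightarrow>'m}" unfolding PwG_def by (auto simp: fun_eq_iff)
  have d0: "deltaG {} s t x = 0" for x :: "'v\<Rightarrow>'m" unfolding deltaG_def by (auto simp: fun_eq_iff)
  have a0: "adjG {} s t = (\<lambda>_ _. False)" unfolding adjG_def by (auto simp: fun_eq_iff)
  have rf: "(\<lambda>_ _. False)\<^sup>*\<^sup>* a b \<longleftrightarrow> a = b" for a b :: 'v
  proof
    show "(\<lambda>_ _. False)\<^sup>*\<^sup>* a b \<Longrightarrow> a = b" by (induction rule: rtranclp_induct) auto
  qed simp
  have "compsG V {} s t = (\<lambda>v. {v}) ` V" unfolding compsG_def a0 rf by auto
  then have "card (compsG V {} s t) = card V" by (simp add: card_image)
  then show ?case
    by (intro exI[of _ "\<lambda>_. 0"] exI[of _ 0]) (auto simp: c0 p0 d0)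
next
  case (insert e F)
  from insert.prems have se: "s e \<in> V" "t e \<in> V" by auto
  from insert.prems have prF: "\<forall>e\<in>F. s e \<in> V \<and> t e \<in> V" by auto
  from insert.IH[OF prF] obtain p' :: "('e\<Rightarrow>'m)\<Rightarrow>nat\<Rightarrow>'m" and b' where
    add': "\<forall>y\<in>codG F. \<forall>z\<in>codG F. p' (y+z) = p' y + p' z" and
    im': "p' ` codG F = PwG b'" and
    ker': "{y\<in>codG F. p' y = 0} = range (deltaG F s t)" and
    cnt': "b' + card V = card F + card (compsG V F s t)" by blast
  have ker'': "y \<in> codG F \<Longrightarrow> p' y = 0 \<longleftrightarrow> (\<exists>x. y = deltaG F s t x)" for y
    using ker' by blast
  have pw': "y \<in> codG F \<Longrightarrow> j \<ge> b' \<Longrightarrow> p' y j = 0" for y j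
    using im' unfolding PwG_def by blast
  show ?case
  proof (cases "(adjG F s t)\<^sup>*\<^sup>* (s e) (t e)")
    case True
    obtain \<psi> :: "('e\<Rightarrow>'m)\<Rightarrow>'m" where ps1: "\<forall>y z. \<psi> (y+z) = \<psi> y + \<psi> z"
      and ps2: "\<forall>x. \<psi> (deltaG F s t x) = x (t e) - x (s e)"
      using path_fun[OF True] by blast
    define p where "p y = (\<lambda>j. if j < b' then p' (y(e:=0)) j else if j = b' then y e - \<psi> (y(e:=0)) else 0)"
      for y :: "'e\<Rightarrow>'m"
    have "\<forall>y\<in>codG (insert e F). \<forall>z\<in>codG (insert e F). p (y+z) = p y + p z"
    proof (intro ballI)
      fix y z :: "'e\<Rightarrow>'m" assume y: "y \<in> codG (insert e F)" and z: "z \<in> codG (insert e F)"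
      have "p' ((y+z)(e:=0)) = p' (y(e:=0)) + p' (z(e:=0))"
        unfolding upd_plus using add' codG_upd[OF y] codG_upd[OF z] by blast
      moreover have "\<psi> ((y+z)(e:=0)) = \<psi> (y(e:=0)) + \<psi> (z(e:=0))"
        unfolding upd_plus using ps1 by blast
      ultimately show "p (y+z) = p y + p z"
        unfolding p_def by (auto simp: fun_eq_iff algebra_simps)
    qed
    moreover have "p ` codG (insert e F) = PwG (Suc b')"
    proof
      show "p ` codG (insert e F) \<subseteq> PwG (Suc b')" unfolding p_def PwG_def by auto
    next
      show "PwG (Suc b') \<subseteq> p ` codG (insert e F)"
      proof
        fix f :: "nat\<Rightarrow>'m" assume f: "f \<in> PwG (Suc b')"
        have "(\<lambda>j. if j < b' then f j else 0) \<in> PwG b'" unfolding PwG_def by auto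
        then obtain y0 where y0: "y0 \<in> codG F" "p' y0 = (\<lambda>j. if j < b' then f j else 0)"
          using im' by (metis (no_types, lifting) imageE)
        define y where "y = y0(e := f b' + \<psi> y0)"
        have yu: "y(e:=0) = y0" unfolding y_def using codG_id[OF insert.hyps(2) y0(1)] by simp
        have "y \<in> codG (insert e F)" using y0(1) unfolding y_def codG_def by auto
        moreover have "p y = f"
        proof
          fix j show "p y j = f j"
            using f y0(2) unfolding p_def yu PwG_def by (auto simp: y_def)
        qed
        ultimately show "f \<in> p ` codG (insert e F)" by blast
      qed
    qed
    moreover have "{y\<in>codG (insert e F). p y = 0} = range (deltaG (insert e F) s t)"
    proof
      show "{y\<in>codG (insert e F). p y = 0} \<subseteq> range (deltaG (insert e F) s t)"
      proof
        fix y :: "'e\<Rightarrow>'m" assume "y \<in> {y\<in>codG (insert e F). p y = 0}"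
        then have y: "y \<in> codG (insert e F)" "p y = 0" by auto
        have "p' (y(e:=0)) = 0"
        proof
          fix j show "p' (y(e:=0)) j = 0 j"
          proof (cases "j < b'")
            case True then show ?thesis using fun_cong[OF y(2), of j] unfolding p_def by simp
          next
            case False then show ?thesis using pw'[OF codG_upd[OF y(1)]] by simp
          qed
        qed
        then obtain x where x: "y(e:=0) = deltaG F s t x" using ker'' codG_upd[OF y(1)] by blast
        have "y e - \<psi> (y(e:=0)) = 0" using fun_cong[OF y(2), of b'] unfolding p_def by simp
        then have ye: "y e = x (t e) - x (s e)" using ps2 x by simp
        have "y = deltaG (insert e F) s t x"
        proof
          fix f show "y f = deltaG (insert e F) s t x f"
          proof (cases "f = e")
            case True then show ?thesis using ye unfolding deltaG_def by simp
          next
            case False then show ?thesis using fun_cong[OF x, of f] insert.hyps(2)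
              unfolding deltaG_def by (auto split: if_splits)
          qed
        qed
        then show "y \<in> range (deltaG (insert e F) s t)" by blast
      qed
    next
      show "range (deltaG (insert e F) s t) \<subseteq> {y\<in>codG (insert e F). p y = 0}"
      proof
        fix y :: "'e\<Rightarrow>'m" assume "y \<in> range (deltaG (insert e F) s t)"
        then obtain x where x: "y = deltaG (insert e F) s t x" by blast
        have yu: "y(e:=0) = deltaG F s t x" using x delta_upd[OF insert.hyps(2)] by simp
        have "p' (y(e:=0)) = 0" unfolding yu using ker''[OF delta_cod] by blast
        moreover have "y e = x (t e) - x (s e)" unfolding x deltaG_def by simp
        moreover have "\<psi> (y(e:=0)) = x (t e) - x (s e)" unfolding yu using ps2 by blast
        ultimately have "p y = 0" unfolding p_def by (simp add: fun_eq_iff)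
        then show "y \<in> {y\<in>codG (insert e F). p y = 0}" using x delta_cod by blast
      qed
    qed
    moreover have "Suc b' + card V = card (insert e F) + card (compsG V (insert e F) s t)"
      using cnt' compsA[OF True] insert.hyps by simp
    ultimately show ?thesis by blast
  next
    case False
    define K where "K = {w. (adjG F s t)\<^sup>*\<^sup>* (t e) w}"
    have Kcl: "s f \<in> K \<longleftrightarrow> t f \<in> K" if "f \<in> F" for f
    proof -
      have "adjG F s t (s f) (t f)" "adjG F s t (t f) (s f)" using that unfolding adjG_def by auto
      then show ?thesis unfolding K_def mem_Collect_eq by (meson rtranclp.rtrancl_into_rtrancl)
    qed
    have tK: "t e \<in> K" "s e \<notin> K" using False rtr_sym[of F s t "t e" "s e"] unfolding K_def by auto
    define p where "p y = p' (y(e:=0))" for y :: "'e\<Rightarrow>'m"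
    have "\<forall>y\<in>codG (insert e F). \<forall>z\<in>codG (insert e F). p (y+z) = p y + p z"
    proof (intro ballI)
      fix y z :: "'e\<Rightarrow>'m" assume y: "y \<in> codG (insert e F)" and z: "z \<in> codG (insert e F)"
      show "p (y+z) = p y + p z"
        unfolding p_def upd_plus by (rule add'[rule_format, OF codG_upd[OF y] codG_upd[OF z]])
    qed
    moreover have "p ` codG (insert e F) = PwG b'"
    proof -
      have "(\<lambda>y::'e\<Rightarrow>'m. y(e:=0)) ` codG (insert e F) = codG F"
      proof
        show "(\<lambda>y::'e\<Rightarrow>'m. y(e:=0)) ` codG (insert e F) \<subseteq> codG F"
          by (rule image_subsetI) (rule codG_upd)
        show "codG F \<subseteq> (\<lambda>y::'e\<Rightarrow>'m. y(e:=0)) ` codG (insert e F)"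
        proof
          fix y :: "'e\<Rightarrow>'m" assume y: "y \<in> codG F"
          have "y = y(e:=0)" using codG_id[OF insert.hyps(2) y] by simp
          then show "y \<in> (\<lambda>y::'e\<Rightarrow>'m. y(e:=0)) ` codG (insert e F)" using codG_mono[OF y] by blast
        qed
      qed
      moreover have "p ` codG (insert e F) = p' ` ((\<lambda>y::'e\<Rightarrow>'m. y(e:=0)) ` codG (insert e F))"
        unfolding p_def by (simp only: image_image)
      ultimately have "p ` codG (insert e F) = p' ` codG F" by simp
      then show ?thesis using im' by simp
    qed
    moreover have "{y\<in>codG (insert e F). p y = 0} = range (deltaG (insert e F) s t)"
    proof
      show "{y\<in>codG (insert e F). p y = 0} \<subseteq> range (deltaG (insert e F) s t)"
      proof
        fix y :: "'e\<Rightarrow>'m" assume "y \<in> {y\<in>codG (insert e F). p y = 0}"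
        then have y: "y \<in> codG (insert e F)" "p y = 0" by auto
        have "p' (y(e:=0)) = 0" using y(2) unfolding p_def .
        then obtain x where x: "y(e:=0) = deltaG F s t x" using ker''[OF codG_upd[OF y(1)]] by blast
        define c where "c = y e - (x (t e) - x (s e))"
        define x' where "x' v = x v + (if v \<in> K then c else 0)" for v
        have "y = deltaG (insert e F) s t x'"
        proof
          fix f show "y f = deltaG (insert e F) s t x' f"
          proof (cases "f = e")
            case True then show ?thesis using tK unfolding deltaG_def x'_def c_def by (simp add: algebra_simps)
          next
            case False
            show ?thesis
            proof (cases "f \<in> F")
              case True
              have yf: "y f = x (t f) - x (s f)" using fun_cong[OF x, of f] False True
                unfolding deltaG_def by simp
              show ?thesis using Kcl[OF True] True unfolding yf deltaG_def x'_def
                by (cases "s f \<in> K") (simp_all add: algebra_simps)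
            next
              case False
              have "y f = 0" using fun_cong[OF x, of f] \<open>f \<noteq> e\<close> False
                unfolding deltaG_def by simp
              then show ?thesis using \<open>f \<noteq> e\<close> False unfolding deltaG_def by simp
            qed
          qed
        qed
        then show "y \<in> range (deltaG (insert e F) s t)" by blast
      qed
    next
      show "range (deltaG (insert e F) s t) \<subseteq> {y\<in>codG (insert e F). p y = 0}"
      proof
        fix y :: "'e\<Rightarrow>'m" assume "y \<in> range (deltaG (insert e F) s t)"
        then obtain x where x: "y = deltaG (insert e F) s t x" by blast
        have yu: "y(e:=0) = deltaG F s t x" using x delta_upd[OF insert.hyps(2)] by simp
        have "p y = 0" unfolding p_def yu using ker''[OF delta_cod] by blast
        then show "y \<in> {y\<in>codG (insert e F). p y = 0}" using x delta_cod by blast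
      qed
    qed
    moreover have "b' + card V = card (insert e F) + card (compsG V (insert e F) s t)"
      using cnt' compsB[OF assms(2) se False] insert.hyps by simp
    ultimately show ?thesis by blast
  qed
qed

section \<open>Curve-specific facts\<close>

lemma zmul_0[simp]: "zmul 0 g = 0" unfolding zmul_def by simp
lemma zmul_zero[simp]: "zmul k (0::'g::ab_group_add) = 0" unfolding zmul_def by simp
lemma zmul_1[simp]: "zmul 1 g = g" unfolding zmul_def by simp
lemma zmul_m1[simp]: "zmul (-1) g = - g" unfolding zmul_def by simp

lemma zmul_eps: "zmul (eps C e v) g = (if v = tgt C e then g else 0) - (if v = src C e then g else 0)"
  unfolding eps_def by (cases "v = tgt C e"; cases "v = src C e") simp_all

lemma sum_eps:
  assumes "finite (VF C)" "src C e \<in> VF C" "tgt C e \<in> VF C"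
  shows "(\<Sum>v\<in>VF C. zmul (eps C e v) (f v)) = f (tgt C e) - f (src C e)"
  unfolding zmul_eps using assms by (simp add: sum_subtractf)

lemma slope_G_zero: "(\<lambda>_. 0) \<in> slope_G C e"
  unfolding slope_G_def by (rule CollectI, rule exI[of _ "{}"]) simp

lemma slope_G_triv: "slope C e = {\<lambda>_. 0} \<Longrightarrow> slope_G C e = {\<lambda>_. 0}"
  unfolding slope_G_def by (auto simp: fun_eq_iff)

lemma rel0_adjG: "rel0 C = adjG (zero_slope_edges C) (src C) (tgt C)"
  unfolding rel0_def adjG_def by (auto simp: fun_eq_iff)

context
  fixes C :: "('v, 'e, 'n) tcurve"
  assumes wf: "is_param_trop_curve C"
begin

lemma finVF: "finite (VF C)" using wf unfolding is_param_trop_curve_def by blast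
lemma finVI: "finite (VI C)" using wf unfolding is_param_trop_curve_def by blast
lemma finED: "finite (ED C)" using wf unfolding is_param_trop_curve_def by blast
lemma disj: "VF C \<inter> VI C = {}" using wf unfolding is_param_trop_curve_def by blast
lemma ends: "e \<in> ED C \<Longrightarrow> src C e \<in> VF C \<union> VI C \<and> tgt C e \<in> VF C \<union> VI C"
  using wf unfolding is_param_trop_curve_def by blast

lemma Z_bounded: "e \<in> zero_slope_edges C \<Longrightarrow> e \<in> bounded_edges C"
  unfolding zero_slope_edges_def by blast

lemma Z_ends: "e \<in> zero_slope_edges C \<Longrightarrow> src C e \<in> VF C \<and> tgt C e \<in> VF C"
  unfolding zero_slope_edges_def bounded_edges_def by blast

lemma Z_ED: "zero_slope_edges C \<subseteq> ED C"
  unfolding zero_slope_edges_def bounded_edges_def by blast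

lemma Z_h:
  assumes e: "e \<in> zero_slope_edges C"
  shows "hmap C (tgt C e) = hmap C (src C e)"
proof -
  have eb: "e \<in> bounded_edges C" and sl: "slope C e = {\<lambda>_. 0}"
    using e unfolding zero_slope_edges_def by auto
  have lp: "len C e > 0" using wf eb unfolding is_param_trop_curve_def by blast
  have il: "in_lattice (edge_vec C e)" using wf eb unfolding is_param_trop_curve_def by blast
  define a where "a i = (SOME k. real_of_int k = edge_vec C e i)" for i
  have a: "real_of_int (a i) = edge_vec C e i" for i
  proof -
    have "edge_vec C e i \<in> \<int>" using il unfolding in_lattice_def by blast
    then have "\<exists>k. real_of_int k = edge_vec C e i" by (metis Ints_cases)
    then show ?thesis unfolding a_def by (rule someI_ex)
  qed
  have "a \<in> slope C e" unfolding slope_def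
    by (rule CollectI, rule exI[of _ "1 / len C e"]) (simp add: a edge_vec_def)
  then have "a = (\<lambda>_. 0)" using sl by blast
  then have "edge_vec C e i = 0" for i using a[of i] by simp
  then show ?thesis using lp unfolding edge_vec_def by (auto simp: fun_eq_iff)
qed

lemma rel_const:
  assumes "\<forall>e\<in>zero_slope_edges C. f (tgt C e) = f (src C e)"
    and "(rel0 C)\<^sup>*\<^sup>* v w"
  shows "f w = f v"
  using assms(2)
proof (induction rule: rtranclp_induct)
  case base then show ?case by simp
next
  case (step y z)
  then show ?case using assms(1) unfolding rel0_def by metis
qed

lemma h_class: "w \<in> vclass C v \<Longrightarrow> v \<in> VF C \<Longrightarrow> hmap C w = hmap C v"
  unfolding vclass_def using rel_const[of "hmap C"] Z_h by auto

lemma self_class: "v \<in> VF C \<Longrightarrow> v \<in> vclass C v"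
  unfolding vclass_def by simp

lemma class_sub: "v \<in> VF C \<Longrightarrow> vclass C v \<subseteq> VF C"
  unfolding vclass_def by auto

lemma class_eq: "v \<in> VF C \<Longrightarrow> w \<in> vclass C v \<Longrightarrow> vclass C w = vclass C v"
proof -
  assume v: "v \<in> VF C" and w: "w \<in> vclass C v"
  let ?R = "(adjG (zero_slope_edges C) (src C) (tgt C))\<^sup>*\<^sup>*"
  have wv: "w \<in> VF C" "?R v w" using v w unfolding vclass_def rel0_adjG by auto
  have "?R w u \<longleftrightarrow> ?R v u" for u
    using wv(2) rtr_sym[OF wv(2)] rtranclp_trans by metis
  then show ?thesis using v wv(1) unfolding vclass_def rel0_adjG by auto
qed

lemma some_class: "v \<in> VF C \<Longrightarrow> (SOME u. u \<in> vclass C v) \<in> vclass C v"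
  using self_class by (rule someI)

lemma Z_class: "e \<in> zero_slope_edges C \<Longrightarrow> vclass C (tgt C e) = vclass C (src C e)"
proof -
  assume e: "e \<in> zero_slope_edges C"
  then have "src C e \<in> VF C" "tgt C e \<in> VF C" using Z_ends by auto
  moreover have "rel0 C (src C e) (tgt C e)" using e unfolding rel0_def by blast
  ultimately have "tgt C e \<in> vclass C (src C e)" unfolding vclass_def by auto
  then show ?thesis using class_eq \<open>src C e \<in> VF C\<close> by blast
qed

lemma class_VI: "v \<in> VI C \<Longrightarrow> vclass C v = {v}"
  using disj unfolding vclass_def by auto

lemma class_in_VF: "v \<in> VF C \<union> VI C \<Longrightarrow> vclass C v \<in> vclass C ` VF C \<longleftrightarrow> v \<in> VF C"
proof
  assume v: "v \<in> VF C \<union> VI C" and "vclass C v \<in> vclass C ` VF C"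
  then obtain w where w: "w \<in> VF C" "vclass C v = vclass C w" by auto
  show "v \<in> VF C"
  proof (rule ccontr)
    assume "v \<notin> VF C"
    then have "vclass C v = {v}" using v class_VI by auto
    then have "w = v" using w self_class by auto
    then show False using w \<open>v \<notin> VF C\<close> by simp
  qed
qed auto

lemma VF_contract: "VF (contract C) = vclass C ` VF C"
  unfolding contract_def by simp

lemma bounded_contract: "bounded_edges (contract C) = bounded_edges C - zero_slope_edges C"
proof -
  have "e \<in> bounded_edges (contract C) \<longleftrightarrow> e \<in> bounded_edges C - zero_slope_edges C" for e
  proof (cases "e \<in> ED C")
    case True
    then show ?thesis using ends[OF True] class_in_VF
      unfolding bounded_edges_def contract_def by auto
  next
    case False then show ?thesis unfolding bounded_edges_def contract_def by auto
  qed
  then show ?thesis by blast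
qed

lemma hmap_contract: "v \<in> VF C \<Longrightarrow> hmap (contract C) (vclass C v) = hmap C v"
  unfolding contract_def using h_class some_class by simp

lemma edge_contract:
  assumes "e \<in> bounded_edges (contract C)"
  shows "edge_vec (contract C) e = edge_vec C e" "slope (contract C) e = slope C e"
    "slope_G (contract C) e = slope_G C e" "edge_mult cal (contract C) e = edge_mult cal C e"
proof -
  have eb: "e \<in> bounded_edges C" using assms bounded_contract by auto
  then have st: "src C e \<in> VF C" "tgt C e \<in> VF C" unfolding bounded_edges_def by auto
  have h1: "hmap (contract C) (tgt (contract C) e) = hmap C (tgt C e)"
    "hmap (contract C) (src (contract C) e) = hmap C (src C e)"
    using hmap_contract st by (simp_all add: contract_def[of C] del: hmap_contract)
  show ev: "edge_vec (contract C) e = edge_vec C e" unfolding edge_vec_def h1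
    by (simp add: contract_def)
  show sl: "slope (contract C) e = slope C e" unfolding slope_def h1 ..
  show "slope_G (contract C) e = slope_G C e" unfolding slope_G_def sl ..
  show "edge_mult cal (contract C) e = edge_mult cal C e" unfolding edge_mult_def ev ..
qed

lemma map_C:
  assumes "e \<in> bounded_edges C"
  shows "cx_map cal C x e = (\<lambda>i. fst x (tgt C e) i - fst x (src C e) i + zmul (edge_mult cal C e) (snd x e i))"
proof -
  have st: "src C e \<in> VF C" "tgt C e \<in> VF C" using assms unfolding bounded_edges_def by auto
  show ?thesis unfolding cx_map_def using assms sum_eps[OF finVF st, of "\<lambda>v. fst x v _"] by simp
qed

lemma map_C':
  assumes "e \<in> bounded_edges (contract C)"
  shows "cx_map cal (contract C) x e =
     (\<lambda>i. fst x (vclass C (tgt C e)) i - fst x (vclass C (src C e)) i + zmul (edge_mult cal C e) (snd x e i))"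
proof -
  have st: "src (contract C) e \<in> VF (contract C)" "tgt (contract C) e \<in> VF (contract C)"
    using assms unfolding bounded_edges_def by auto
  have fin: "finite (VF (contract C))" unfolding VF_contract using finVF by simp
  show ?thesis unfolding cx_map_def using assms sum_eps[OF fin st, of "\<lambda>v. fst x v _"]
      edge_contract(4)[OF assms]
    by (simp add: contract_def[of C])
qed


lemma lift:
  assumes x: "x \<in> cx_dom (contract C)"
  shows "nat_map1 C x \<in> cx_dom C \<and> cx_map cal C (nat_map1 C x) = cx_map cal (contract C) x"
proof -
  obtain X xe where xx: "x = (X, xe)" by (cases x)
  have X0: "\<And>c. c \<notin> VF (contract C) \<Longrightarrow> X c = (\<lambda>_. 0)"
    and xe0: "\<And>e. e \<notin> bounded_edges (contract C) \<Longrightarrow> xe e = (\<lambda>_. 0)"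
    and xeS: "\<And>e. e \<in> bounded_edges (contract C) \<Longrightarrow> xe e \<in> slope_G (contract C) e"
    using x unfolding xx cx_dom_def by auto
  have nm: "nat_map1 C (X, xe) = ((\<lambda>v. if v \<in> VF C then X (vclass C v) else (\<lambda>_. 0)), xe)"
    unfolding nat_map1_def fst_conv snd_conv ..
  have dom: "nat_map1 C (X, xe) \<in> cx_dom C"
    unfolding nm cx_dom_def
  proof (intro CollectI, unfold case_prod_conv, intro conjI allI impI ballI)
    fix e assume "e \<notin> bounded_edges C"
    then show "xe e = (\<lambda>_. 0)" using xe0 bounded_contract by auto
  next
    fix e assume e: "e \<in> bounded_edges C"
    show "xe e \<in> slope_G C e"
    proof (cases "e \<in> zero_slope_edges C")
      case True then show ?thesis using xe0[of e] bounded_contract slope_G_zero by auto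
    next
      case False
      then have "e \<in> bounded_edges (contract C)" using e bounded_contract by auto
      then show ?thesis using xeS edge_contract(3) by metis
    qed
  qed simp
  have "cx_map cal C (nat_map1 C (X, xe)) e = cx_map cal (contract C) (X, xe) e" for e
  proof (cases "e \<in> bounded_edges C")
    case False
    then have "e \<notin> bounded_edges (contract C)" using bounded_contract by auto
    then show ?thesis using False unfolding cx_map_def by simp
  next
    case True
    have st: "src C e \<in> VF C" "tgt C e \<in> VF C" using True unfolding bounded_edges_def by auto
    show ?thesis
    proof (cases "e \<in> zero_slope_edges C")
      case Z: True
      then have "e \<notin> bounded_edges (contract C)" using bounded_contract by auto
      then show ?thesis using map_C[OF True, of cal "nat_map1 C (X, xe)"] st Z_class[OF Z] xe0[of e]
        unfolding nm cx_map_def[of cal "contract C"] by simp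
    next
      case False
      then have b': "e \<in> bounded_edges (contract C)" using True bounded_contract by auto
      show ?thesis using map_C[OF True, of cal "nat_map1 C (X, xe)"] map_C'[OF b', of cal "(X, xe)"] st
        unfolding nm by simp
    qed
  qed
  then have "cx_map cal C (nat_map1 C (X, xe)) = cx_map cal (contract C) (X, xe)" by (rule ext)
  then show ?thesis using dom unfolding xx by blast
qed

lemma descend:
  assumes w: "(xv, xe) \<in> cx_dom C" and c: "\<forall>e\<in>zero_slope_edges C. xv (tgt C e) = xv (src C e)"
  shows "\<exists>x'\<in>cx_dom (contract C). nat_map1 C x' = (xv, xe)"
proof -
  have xv0: "\<And>v. v \<notin> VF C \<Longrightarrow> xv v = (\<lambda>_. 0)"
    and xe0: "\<And>e. e \<notin> bounded_edges C \<Longrightarrow> xe e = (\<lambda>_. 0)"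
    and xeS: "\<And>e. e \<in> bounded_edges C \<Longrightarrow> xe e \<in> slope_G C e"
    using w unfolding cx_dom_def by auto
  have cst: "xv u = xv v" if "v \<in> VF C" "u \<in> vclass C v" for u v
  proof -
    have "(rel0 C)\<^sup>*\<^sup>* v u" using that unfolding vclass_def by auto
    then show ?thesis by (rule rel_const[OF c])
  qed
  define X where "X c = (if c \<in> VF (contract C) then xv (SOME u. u \<in> c) else (\<lambda>_. 0))" for c
  have "nat_map1 C (X, xe) = (xv, xe)"
  proof -
    have "(if v \<in> VF C then X (vclass C v) else (\<lambda>_. 0)) = xv v" for v
    proof (cases "v \<in> VF C")
      case True
      have "vclass C v \<in> vclass C ` VF C" using True by (rule imageI)
      then have "X (vclass C v) = xv (SOME u. u \<in> vclass C v)" unfolding X_def VF_contract by simp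
      then show ?thesis using True cst[OF True some_class[OF True]] by simp
    next
      case False then show ?thesis using xv0 by simp
    qed
    then have "(\<lambda>v. if v \<in> VF C then X (vclass C v) else (\<lambda>_. 0)) = xv" by (rule ext)
    then show ?thesis unfolding nat_map1_def fst_conv snd_conv by simp
  qed
  moreover have "(X, xe) \<in> cx_dom (contract C)"
    unfolding cx_dom_def
  proof (intro CollectI, unfold case_prod_conv, intro conjI allI impI ballI)
    fix c assume "c \<notin> VF (contract C)" then show "X c = (\<lambda>_. 0)" unfolding X_def by simp
  next
    fix e assume e: "e \<notin> bounded_edges (contract C)"
    show "xe e = (\<lambda>_. 0)"
    proof (cases "e \<in> bounded_edges C")
      case True
      then have "e \<in> zero_slope_edges C" using e bounded_contract by auto
      then have "slope C e = {\<lambda>_. 0}" unfolding zero_slope_edges_def by blast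
      then show ?thesis using xeS[OF True] unfolding slope_G_triv[OF \<open>slope C e = {\<lambda>_. 0}\<close>] by simp
    next
      case False then show ?thesis using xe0 by simp
    qed
  next
    fix e assume e: "e \<in> bounded_edges (contract C)"
    have "e \<in> bounded_edges C" using e bounded_contract by blast
    then show "xe e \<in> slope_G (contract C) e" unfolding edge_contract(3)[OF e] by (rule xeS)
  qed
  ultimately show ?thesis by (intro bexI[of _ "(X,xe)"])
qed

lemma Z_const:
  assumes w: "(xv, xe) \<in> cx_dom C" and e: "e \<in> zero_slope_edges C"
    and m: "cx_map cal C (xv, xe) e = (\<lambda>_. 0)"
  shows "xv (tgt C e) = xv (src C e)"
proof -
  have eb: "e \<in> bounded_edges C" using e Z_bounded by blast
  have xs: "xe e \<in> slope_G C e" using w eb unfolding cx_dom_def by auto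
  have sl: "slope C e = {\<lambda>_. 0}" using e unfolding zero_slope_edges_def by blast
  have "xe e = (\<lambda>_. 0)" using xs unfolding slope_G_triv[OF sl] by simp
  then have xe0: "xe e i = 0" for i by simp
  have "cx_map cal C (xv, xe) e i = xv (tgt C e) i - xv (src C e) i" for i
    using fun_cong[OF map_C[OF eb, of cal "(xv,xe)"], of i] xe0[of i] by simp
  then have "xv (tgt C e) i - xv (src C e) i = 0" for i using fun_cong[OF m, of i] by simp
  then show ?thesis by (simp add: fun_eq_iff)
qed

end


theorem mainTheorem9:
  fixes C :: "('v, 'e, 'n::finite) tcurve"
  assumes "is_param_trop_curve C"
  shows "genus (contract C) \<le> genus C \<and>
    (\<forall>cal::bool.
       bij_betw (nat_map1 C)
         (cx_ker cal (contract C) :: (('v set \<Rightarrow> 'n \<Rightarrow> 'g::ab_group_add) \<times> ('e \<Rightarrow> 'n \<Rightarrow> 'g)) set)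
         (cx_ker cal C)
     \<and> (\<forall>y \<in> (cx_cod (contract C) :: ('e \<Rightarrow> 'n \<Rightarrow> 'g) set).
           y \<in> cx_image cal (contract C) \<longleftrightarrow> y \<in> cx_image cal C)
     \<and> (\<exists>p :: ('e \<Rightarrow> 'n \<Rightarrow> 'g) \<Rightarrow> nat \<Rightarrow> 'n \<Rightarrow> 'g.
           (\<forall>y\<in>cx_cod C. \<forall>z\<in>cx_cod C. p (\<lambda>e i. y e i + z e i) = (\<lambda>j i. p y j i + p z j i))
         \<and> p ` cx_cod C = NG_pow (nat (genus C - genus (contract C)))
         \<and> {y \<in> cx_cod C. p y = (\<lambda>_ _. 0)} =
             {(\<lambda>e i. y e i + z e i) | y z. y \<in> cx_cod (contract C) \<and> z \<in> cx_image cal C}))"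
proof -
  note wf = assms
  define Z where "Z = zero_slope_edges C"
  have finZ: "finite Z" unfolding Z_def using finite_subset[OF Z_ED[OF wf] finED[OF wf]] .
  have endsZ: "\<forall>e\<in>Z. src C e \<in> VF C \<and> tgt C e \<in> VF C" unfolding Z_def using Z_ends[OF wf] by blast
  obtain pZ :: "('e\<Rightarrow>'n\<Rightarrow>'g)\<Rightarrow>nat\<Rightarrow>'n\<Rightarrow>'g" and b where
    padd: "\<forall>y\<in>codG Z. \<forall>z\<in>codG Z. pZ (y+z) = pZ y + pZ z" and
    pim: "pZ ` codG Z = PwG b" and
    pker: "{y\<in>codG Z. pZ y = 0} = range (deltaG Z (src C) (tgt C))" and
    pcnt: "b + card (VF C) = card Z + card (compsG (VF C) Z (src C) (tgt C))"
    using H1[OF finZ finVF[OF wf] endsZ] by blast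
  have k: "card (compsG (VF C) Z (src C) (tgt C)) = card (vclass C ` VF C)"
  proof -
    have "compsG (VF C) Z (src C) (tgt C) = vclass C ` VF C"
      unfolding compsG_def Z_def vclass_def rel0_adjG by (rule image_cong) auto
    then show ?thesis by simp
  qed
  have c1: "card (VF C \<union> VI C) = card (VF C) + card (VI C)"
    using card_Un_disjoint[OF finVF[OF wf] finVI[OF wf] disj[OF wf]] .
  have vi: "vclass C ` VI C = (\<lambda>v. {v}) ` VI C" using class_VI[OF wf] by (rule image_cong[OF refl])
  have cvi: "card (vclass C ` VI C) = card (VI C)" unfolding vi by (simp add: card_image)
  have dj: "vclass C ` VF C \<inter> vclass C ` VI C = {}"
  proof (rule ccontr)
    assume "vclass C ` VF C \<inter> vclass C ` VI C \<noteq> {}"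
    then obtain v w where v: "v \<in> VF C" "w \<in> VI C" "vclass C v = vclass C w" by blast
    then have "vclass C v = {w}" using class_VI[OF wf] by simp
    then have "v = w" using self_class[OF wf v(1)] by simp
    then show False using v disj[OF wf] by blast
  qed
  have c2: "card (VF (contract C) \<union> VI (contract C)) = card (vclass C ` VF C) + card (VI C)"
    unfolding contract_def using card_Un_disjoint[OF _ _ dj] finVF[OF wf] finVI[OF wf] cvi by simp
  have c3: "card (ED (contract C)) = card (ED C) - card Z"
    unfolding contract_def Z_def using card_Diff_subset[OF finZ[unfolded Z_def] Z_ED[OF wf]] by simp
  have cZ: "card Z \<le> card (ED C)" unfolding Z_def using card_mono[OF finED[OF wf] Z_ED[OF wf]] .
  have gd: "genus C - genus (contract C) = int b"
    unfolding genus_def using c1 c2 c3 cZ pcnt k by simp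
  have part1: "genus (contract C) \<le> genus C" using gd by simp
  have part2: "\<forall>cal::bool.
       bij_betw (nat_map1 C)
         (cx_ker cal (contract C) :: (('v set \<Rightarrow> 'n \<Rightarrow> 'g::ab_group_add) \<times> ('e \<Rightarrow> 'n \<Rightarrow> 'g)) set)
         (cx_ker cal C)
     \<and> (\<forall>y \<in> (cx_cod (contract C) :: ('e \<Rightarrow> 'n \<Rightarrow> 'g) set).
           y \<in> cx_image cal (contract C) \<longleftrightarrow> y \<in> cx_image cal C)
     \<and> (\<exists>p :: ('e \<Rightarrow> 'n \<Rightarrow> 'g) \<Rightarrow> nat \<Rightarrow> 'n \<Rightarrow> 'g.
           (\<forall>y\<in>cx_cod C. \<forall>z\<in>cx_cod C. p (\<lambda>e i. y e i + z e i) = (\<lambda>j i. p y j i + p z j i))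
         \<and> p ` cx_cod C = NG_pow (nat (genus C - genus (contract C)))
         \<and> {y \<in> cx_cod C. p y = (\<lambda>_ _. 0)} =
             {(\<lambda>e i. y e i + z e i) | y z. y \<in> cx_cod (contract C) \<and> z \<in> cx_image cal C})"
  proof (intro allI conjI)
    fix cal :: bool
    show "bij_betw (nat_map1 C)
         (cx_ker cal (contract C) :: (('v set \<Rightarrow> 'n \<Rightarrow> 'g::ab_group_add) \<times> ('e \<Rightarrow> 'n \<Rightarrow> 'g)) set)
         (cx_ker cal C)"
    proof (rule bij_betw_imageI)
      show "inj_on (nat_map1 C) (cx_ker cal (contract C) :: (('v set \<Rightarrow> 'n \<Rightarrow> 'g) \<times> ('e \<Rightarrow> 'n \<Rightarrow> 'g)) set)"
      proof (rule inj_onI)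
        fix x x' :: "('v set \<Rightarrow> 'n \<Rightarrow> 'g) \<times> ('e \<Rightarrow> 'n \<Rightarrow> 'g)"
        assume x: "x \<in> cx_ker cal (contract C)" and x': "x' \<in> cx_ker cal (contract C)"
          and eq: "nat_map1 C x = nat_map1 C x'"
        obtain X xe where xx: "x = (X, xe)" by (cases x)
        obtain X' xe' where xx': "x' = (X', xe')" by (cases x')
        have X0: "\<And>c. c \<notin> VF (contract C) \<Longrightarrow> X c = (\<lambda>_. 0)"
          using x unfolding xx cx_ker_def cx_dom_def by auto
        have X0': "\<And>c. c \<notin> VF (contract C) \<Longrightarrow> X' c = (\<lambda>_. 0)"
          using x' unfolding xx' cx_ker_def cx_dom_def by auto
        have e1: "xe = xe'" using eq unfolding xx xx' nat_map1_def fst_conv snd_conv prod.inject by (rule conjunct2)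
        have e2: "(\<lambda>v. if v \<in> VF C then X (vclass C v) else (\<lambda>_. 0)) =
                  (\<lambda>v. if v \<in> VF C then X' (vclass C v) else (\<lambda>_. 0))"
          using eq unfolding xx xx' nat_map1_def fst_conv snd_conv prod.inject by (rule conjunct1)
        have "X c = X' c" for c
        proof (cases "c \<in> VF (contract C)")
          case True
          then obtain v where v: "v \<in> VF C" "c = vclass C v" unfolding VF_contract[OF wf] by blast
          show ?thesis using fun_cong[OF e2, of v] v by simp
        next
          case False then show ?thesis using X0 X0' by simp
        qed
        then show "x = x'" unfolding xx xx' e1 by (simp add: fun_eq_iff)
      qed
    next
      show "nat_map1 C ` (cx_ker cal (contract C) :: (('v set \<Rightarrow> 'n \<Rightarrow> 'g) \<times> ('e \<Rightarrow> 'n \<Rightarrow> 'g)) set)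
            = cx_ker cal C"
      proof
        show "nat_map1 C ` (cx_ker cal (contract C) :: (('v set \<Rightarrow> 'n \<Rightarrow> 'g) \<times> ('e \<Rightarrow> 'n \<Rightarrow> 'g)) set)
            \<subseteq> cx_ker cal C"
        proof
          fix w assume "w \<in> nat_map1 C ` (cx_ker cal (contract C) :: (('v set \<Rightarrow> 'n \<Rightarrow> 'g) \<times> ('e \<Rightarrow> 'n \<Rightarrow> 'g)) set)"
          then obtain x :: "('v set \<Rightarrow> 'n \<Rightarrow> 'g) \<times> ('e \<Rightarrow> 'n \<Rightarrow> 'g)"
            where x: "x \<in> cx_ker cal (contract C)" "w = nat_map1 C x" by blast
          have xd: "x \<in> cx_dom (contract C)" "cx_map cal (contract C) x = (\<lambda>_ _. 0)"
            using x(1) unfolding cx_ker_def by auto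
          have "nat_map1 C x \<in> cx_dom C" "cx_map cal C (nat_map1 C x) = cx_map cal (contract C) x"
            using lift[OF wf xd(1)] by auto
          then show "w \<in> cx_ker cal C" using xd(2) x(2) unfolding cx_ker_def by simp
        qed
      next
        show "cx_ker cal C \<subseteq> nat_map1 C ` (cx_ker cal (contract C) :: (('v set \<Rightarrow> 'n \<Rightarrow> 'g) \<times> ('e \<Rightarrow> 'n \<Rightarrow> 'g)) set)"
        proof
          fix w :: "('v \<Rightarrow> 'n \<Rightarrow> 'g) \<times> ('e \<Rightarrow> 'n \<Rightarrow> 'g)"
          assume w: "w \<in> cx_ker cal C"
          obtain xv xe where ww: "w = (xv, xe)" by (cases w)
          have wd: "(xv, xe) \<in> cx_dom C" "cx_map cal C (xv, xe) = (\<lambda>_ _. 0)"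
            using w unfolding ww cx_ker_def by auto
          have "\<forall>e\<in>zero_slope_edges C. xv (tgt C e) = xv (src C e)"
          proof
            fix e assume e: "e \<in> zero_slope_edges C"
            show "xv (tgt C e) = xv (src C e)" using Z_const[OF wf wd(1) e fun_cong[OF wd(2), of e]] .
          qed
          then obtain x' :: "('v set \<Rightarrow> 'n \<Rightarrow> 'g) \<times> ('e \<Rightarrow> 'n \<Rightarrow> 'g)"
            where x': "x' \<in> cx_dom (contract C)" "nat_map1 C x' = (xv, xe)"
            using descend[OF wf wd(1)] by blast
          have "cx_map cal (contract C) x' = cx_map cal C (nat_map1 C x')"
            using lift[OF wf x'(1)] by simp
          then have "cx_map cal (contract C) x' = (\<lambda>_ _. 0)" using x'(2) wd(2) by simp
          then have "x' \<in> cx_ker cal (contract C)" using x'(1) unfolding cx_ker_def by simp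
          moreover have "w = nat_map1 C x'" using x'(2) ww by simp
          ultimately show "w \<in> nat_map1 C ` (cx_ker cal (contract C) :: (('v set \<Rightarrow> 'n \<Rightarrow> 'g) \<times> ('e \<Rightarrow> 'n \<Rightarrow> 'g)) set)"
            by (intro image_eqI[where x=x'])
        qed
      qed
    qed
  next
    fix cal :: bool
    show "\<forall>y \<in> (cx_cod (contract C) :: ('e \<Rightarrow> 'n \<Rightarrow> 'g) set).
           y \<in> cx_image cal (contract C) \<longleftrightarrow> y \<in> cx_image cal C"
    proof
      fix y :: "'e \<Rightarrow> 'n \<Rightarrow> 'g" assume y: "y \<in> cx_cod (contract C)"
      show "y \<in> cx_image cal (contract C) \<longleftrightarrow> y \<in> cx_image cal C"
      proof
        assume "y \<in> cx_image cal (contract C)"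
        then obtain x :: "('v set \<Rightarrow> 'n \<Rightarrow> 'g) \<times> ('e \<Rightarrow> 'n \<Rightarrow> 'g)"
          where x: "x \<in> cx_dom (contract C)" "y = cx_map cal (contract C) x"
          unfolding cx_image_def by blast
        have "nat_map1 C x \<in> cx_dom C" "y = cx_map cal C (nat_map1 C x)"
          using lift[OF wf x(1)] x(2) by auto
        then show "y \<in> cx_image cal C" unfolding cx_image_def by blast
      next
        assume "y \<in> cx_image cal C"
        then obtain w :: "('v \<Rightarrow> 'n \<Rightarrow> 'g) \<times> ('e \<Rightarrow> 'n \<Rightarrow> 'g)"
          where w: "w \<in> cx_dom C" "y = cx_map cal C w"
          unfolding cx_image_def by blast
        obtain xv xe where ww: "w = (xv, xe)" by (cases w)
        have "\<forall>e\<in>zero_slope_edges C. xv (tgt C e) = xv (src C e)"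
        proof
          fix e assume e: "e \<in> zero_slope_edges C"
          then have "e \<notin> bounded_edges (contract C)" using bounded_contract[OF wf] by auto
          then have "y e = (\<lambda>_. 0)" using y unfolding cx_cod_def by simp
          then have "cx_map cal C (xv, xe) e = (\<lambda>_. 0)" using w(2) ww by simp
          then show "xv (tgt C e) = xv (src C e)" using Z_const[OF wf w(1)[unfolded ww] e] by blast
        qed
        then obtain x' :: "('v set \<Rightarrow> 'n \<Rightarrow> 'g) \<times> ('e \<Rightarrow> 'n \<Rightarrow> 'g)"
          where x': "x' \<in> cx_dom (contract C)" "nat_map1 C x' = (xv, xe)"
          using descend[OF wf w(1)[unfolded ww]] by blast
        have "cx_map cal (contract C) x' = cx_map cal C (nat_map1 C x')"
          using lift[OF wf x'(1)] by simp
        then have "y = cx_map cal (contract C) x'" using x'(2) w(2) ww by simp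
        then show "y \<in> cx_image cal (contract C)" using x'(1) unfolding cx_image_def by blast
      qed
    qed
  next
    fix cal :: bool
    show "\<exists>p :: ('e \<Rightarrow> 'n \<Rightarrow> 'g) \<Rightarrow> nat \<Rightarrow> 'n \<Rightarrow> 'g.
           (\<forall>y\<in>cx_cod C. \<forall>z\<in>cx_cod C. p (\<lambda>e i. y e i + z e i) = (\<lambda>j i. p y j i + p z j i))
         \<and> p ` cx_cod C = NG_pow (nat (genus C - genus (contract C)))
         \<and> {y \<in> cx_cod C. p y = (\<lambda>_ _. 0)} =
             {(\<lambda>e i. y e i + z e i) | y z. y \<in> cx_cod (contract C) \<and> z \<in> cx_image cal C}"
    proof -
      define restr where "restr y = (\<lambda>e. if e \<in> Z then y e else (\<lambda>_. 0))" for y :: "'e\<Rightarrow>'n\<Rightarrow>'g"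
      define p where "p y = pZ (restr y)" for y
      have rc: "restr y \<in> codG Z" for y unfolding restr_def codG_def zero_fun_def by simp
      have Zb: "e \<in> Z \<Longrightarrow> e \<in> bounded_edges C" for e unfolding Z_def using Z_bounded[OF wf] .
      have Zb': "e \<in> Z \<Longrightarrow> e \<notin> bounded_edges (contract C)" for e
        unfolding Z_def using bounded_contract[OF wf] by auto
      have b'b: "e \<in> bounded_edges (contract C) \<Longrightarrow> e \<in> bounded_edges C" for e
        using bounded_contract[OF wf] by auto
      have ker2: "pZ y = 0 \<longleftrightarrow> (\<exists>x. y = deltaG Z (src C) (tgt C) x)" if "y \<in> codG Z" for y
        using pker that by blast
      have A: "\<forall>y\<in>cx_cod C. \<forall>z\<in>cx_cod C. p (\<lambda>e i. y e i + z e i) = (\<lambda>j i. p y j i + p z j i)"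
      proof (intro ballI)
        fix y z :: "'e\<Rightarrow>'n\<Rightarrow>'g"
        have "restr (\<lambda>e i. y e i + z e i) = restr y + restr z"
          unfolding restr_def by (simp add: fun_eq_iff)
        then have "p (\<lambda>e i. y e i + z e i) = p y + p z" unfolding p_def using padd rc by simp
        then show "p (\<lambda>e i. y e i + z e i) = (\<lambda>j i. p y j i + p z j i)" by (simp add: fun_eq_iff)
      qed
      have B: "p ` cx_cod C = NG_pow (nat (genus C - genus (contract C)))"
      proof -
        have "restr ` cx_cod C = codG Z"
        proof
          show "restr ` cx_cod C \<subseteq> codG Z" using rc by blast
          show "codG Z \<subseteq> restr ` cx_cod C"
          proof
            fix y :: "'e\<Rightarrow>'n\<Rightarrow>'g" assume y: "y \<in> codG Z"
            then have y0: "e \<notin> Z \<Longrightarrow> y e = (\<lambda>_. 0)" for e unfolding codG_def zero_fun_def by simp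
            have "y \<in> cx_cod C" unfolding cx_cod_def using y0 Zb by blast
            moreover have "restr y = y" unfolding restr_def using y0 by (auto simp: fun_eq_iff)
            ultimately show "y \<in> restr ` cx_cod C" by (metis imageI)
          qed
        qed
        then have "p ` cx_cod C = pZ ` codG Z" unfolding p_def by (metis image_image)
        also have "\<dots> = PwG b" by (rule pim)
        also have "\<dots> = NG_pow (nat (genus C - genus (contract C)))"
          unfolding gd PwG_def NG_pow_def zero_fun_def by simp
        finally show ?thesis .
      qed
      have C: "{y \<in> cx_cod C. p y = (\<lambda>_ _. 0)} =
             {(\<lambda>e i. y e i + z e i) | y z. y \<in> cx_cod (contract C) \<and> z \<in> cx_image cal C}"
      proof
        show "{y \<in> cx_cod C. p y = (\<lambda>_ _. 0)} \<subseteq>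
             {(\<lambda>e i. y e i + z e i) | y z. y \<in> cx_cod (contract C) \<and> z \<in> cx_image cal C}"
        proof
          fix y :: "'e\<Rightarrow>'n\<Rightarrow>'g" assume "y \<in> {y \<in> cx_cod C. p y = (\<lambda>_ _. 0)}"
          then have y: "y \<in> cx_cod C" "pZ (restr y) = 0" unfolding p_def zero_fun_def by auto
          then obtain x where x: "restr y = deltaG Z (src C) (tgt C) x" using ker2[OF rc] by blast
          define x' where "x' v = (if v \<in> VF C then x v else (\<lambda>_. 0))" for v
          define w where "w = (x', (\<lambda>e. (\<lambda>_. 0)) :: 'e\<Rightarrow>'n\<Rightarrow>'g)"
          have wd: "w \<in> cx_dom C" unfolding w_def cx_dom_def x'_def using slope_G_zero by auto
          define z where "z = cx_map cal C w"
          define y1 where "y1 = (\<lambda>e i. y e i - z e i)"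
          have "y1 \<in> cx_cod (contract C)"
            unfolding cx_cod_def
          proof (intro CollectI allI impI)
            fix e assume e: "e \<notin> bounded_edges (contract C)"
            show "y1 e = (\<lambda>_. 0)"
            proof (cases "e \<in> bounded_edges C")
              case False
              then show ?thesis using y(1) unfolding y1_def z_def cx_cod_def cx_map_def by simp
            next
              case True
              then have eZ: "e \<in> Z" using e bounded_contract[OF wf] unfolding Z_def by auto
              have st: "src C e \<in> VF C" "tgt C e \<in> VF C" using True unfolding bounded_edges_def by auto
              have "z e i = x (tgt C e) i - x (src C e) i" for i
                unfolding z_def using map_C[OF wf True, of cal w] st unfolding w_def x'_def by simp
              moreover have "y e i = x (tgt C e) i - x (src C e) i" for i
                using fun_cong[OF fun_cong[OF x, of e], of i] eZ unfolding restr_def deltaG_def by simp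
              ultimately show ?thesis unfolding y1_def by (simp add: fun_eq_iff)
            qed
          qed
          moreover have "z \<in> cx_image cal C" unfolding z_def cx_image_def using wd by blast
          moreover have "y = (\<lambda>e i. y1 e i + z e i)" unfolding y1_def by simp
          ultimately show "y \<in> {(\<lambda>e i. y e i + z e i) | y z. y \<in> cx_cod (contract C) \<and> z \<in> cx_image cal C}"
            by blast
        qed
      next
        show "{(\<lambda>e i. y e i + z e i) | y z. y \<in> cx_cod (contract C) \<and> z \<in> cx_image cal C}
              \<subseteq> {y \<in> cx_cod C. p y = (\<lambda>_ _. 0)}"
        proof
          fix s :: "'e\<Rightarrow>'n\<Rightarrow>'g" assume "s \<in> {(\<lambda>e i. y e i + z e i) | y z. y \<in> cx_cod (contract C) \<and> z \<in> cx_image cal C}"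
          then obtain y1 z :: "'e\<Rightarrow>'n\<Rightarrow>'g" where s: "s = (\<lambda>e i. y1 e i + z e i)"
            and y1: "y1 \<in> cx_cod (contract C)" and z: "z \<in> cx_image cal C" by blast
          obtain w :: "('v \<Rightarrow> 'n \<Rightarrow> 'g) \<times> ('e \<Rightarrow> 'n \<Rightarrow> 'g)"
            where w: "w \<in> cx_dom C" "z = cx_map cal C w" using z unfolding cx_image_def by blast
          have y10: "e \<notin> bounded_edges (contract C) \<Longrightarrow> y1 e = (\<lambda>_. 0)" for e
            using y1 unfolding cx_cod_def by simp
          have z0: "e \<notin> bounded_edges C \<Longrightarrow> z e = (\<lambda>_. 0)" for e
            unfolding w(2) cx_map_def by simp
          have sc: "s \<in> cx_cod C"
            unfolding cx_cod_def s using y10 z0 b'b by fastforce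
          have "restr s = deltaG Z (src C) (tgt C) (fst w)"
          proof
            fix e show "restr s e = deltaG Z (src C) (tgt C) (fst w) e"
            proof (cases "e \<in> Z")
              case False then show ?thesis unfolding restr_def deltaG_def zero_fun_def by simp
            next
              case True
              have eb: "e \<in> bounded_edges C" using Zb[OF True] .
              have sl: "slope C e = {\<lambda>_. 0}" using True unfolding Z_def zero_slope_edges_def by blast
              have "snd w e \<in> slope_G C e" using w(1) eb unfolding cx_dom_def by auto
              then have sw: "snd w e = (\<lambda>_. 0)" unfolding slope_G_triv[OF sl] by simp
              have "z e i = fst w (tgt C e) i - fst w (src C e) i" for i
                unfolding w(2) using map_C[OF wf eb, of cal w] sw by simp
              moreover have "y1 e = (\<lambda>_. 0)" using y10 Zb'[OF True] .
              ultimately show ?thesis using True unfolding restr_def deltaG_def s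
                by (simp add: fun_eq_iff)
            qed
          qed
          then have "pZ (restr s) = 0" using ker2[OF rc] by blast
          then have "p s = (\<lambda>_ _. 0)" unfolding p_def zero_fun_def by simp
          then show "s \<in> {y \<in> cx_cod C. p y = (\<lambda>_ _. 0)}" using sc by blast
        qed
      qed
      show ?thesis using A B C by blast
    qed
  qed
  show ?thesis using part1 part2 by blast
qed

end
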